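(* Let $\gamma \in (0,1]$. Let $E$ be a valid e-value for a null hypothesis $H_0$, i.e. $E \ge 0$ and $\mathbb{E}[E] \le 1$ under $H_0$, and let $F$ be an arbitrary nonnegative random variable, with any dependence structure between $F$ and $E$. Let $T \in \{0,1\}$ be a random variable such that, conditionally on $(F,E)$, $T \sim \mathrm{Bern}\big((1-\gamma F^{-1})_+\big)$ (i.e. $T$ is drawn based on $F$ using additional independent randomness). Define the active e-value $$\tilde E := (1-T)\,F + T\,(1-\gamma)\,E.$$ Then $\tilde E$ is a valid e-value, i.e. $\tilde E \ge 0$ and $\mathbb{E}[\tilde E] \le 1$ under $H_0$.
   Context: $x_+ = \max(x,0)$. $F$ is a "proxy" for $E$ on which no distributional assumption is made (in particular $\mathbb{E}[F]$ may exceed $1$ under $H_0$). When $F = 0$, $(1-\gamma F^{-1})_+$ is interpreted as $0$. *)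

theory Defs
  imports "HOL-Probability.Probability"
begin

definition bern_param :: "real \<Rightarrow> real \<Rightarrow> real" where
  "bern_param \<gamma> f = (if f = 0 then 0 else max (1 - \<gamma> / f) 0)"

definition active_evalue :: "real \<Rightarrow> real \<Rightarrow> real \<Rightarrow> real \<Rightarrow> real" where
  "active_evalue \<gamma> t f e = (1 - t) * f + t * (1 - \<gamma>) * e"

end

theory Submission
  imports Defs
begin

lemma min_bound:
  assumes "0 < g" "0 \<le> f"
  shows "(1 - bern_param g f) * f \<le> g" "0 \<le> bern_param g f" "bern_param g f \<le> 1"
  using assms by (auto simp: bern_param_def max_def field_simps)

theorem proposition1:
  fixes M :: "'a measure" and E F T :: "'a \<Rightarrow> real" and \<gamma> :: real
  assumes "prob_space M"
    and "0 < \<gamma>" and "\<gamma> \<le> 1"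
    and "E \<in> borel_measurable M" and "\<forall>x\<in>space M. 0 \<le> E x"
    and "(\<integral>\<^sup>+ x. ennreal (E x) \<partial>M) \<le> 1"
    and "F \<in> borel_measurable M" and "\<forall>x\<in>space M. 0 \<le> F x"
    and "T \<in> borel_measurable M" and "\<forall>x\<in>space M. T x \<in> {0, 1}"
    and "AE x in M. real_cond_exp M (vimage_algebra (space M) (\<lambda>x. (F x, E x)) borel) T x
                     = bern_param \<gamma> (F x)"
  shows "(\<forall>x\<in>space M. 0 \<le> active_evalue \<gamma> (T x) (F x) (E x))
       \<and> (\<integral>\<^sup>+ x. ennreal (active_evalue \<gamma> (T x) (F x) (E x)) \<partial>M) \<le> 1"
proof -
  interpret prob_space M by fact
  define G where "G = vimage_algebra (space M) (\<lambda>x. (F x, E x)) borel"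
  note [measurable] = assms(4,7,9)
  have FEm: "(\<lambda>x. (F x, E x)) \<in> borel_measurable M" by measurable
  have sub: "subalgebra M G"
    unfolding subalgebra_def G_def
    using FEm by (auto simp: sets_vimage_algebra2 measurable_def)
  interpret finite_measure_subalgebra M G
    by unfold_locales (rule sub)
  have FEG: "(\<lambda>x. (F x, E x)) \<in> borel_measurable G"
    unfolding G_def by (rule measurable_vimage_algebra1) auto
  have mf: "(fst :: real \<times> real \<Rightarrow> real) \<in> borel_measurable borel"
    by (intro borel_measurable_continuous_onI continuous_intros)
  have ms: "(snd :: real \<times> real \<Rightarrow> real) \<in> borel_measurable borel"
    by (intro borel_measurable_continuous_onI continuous_intros)
  have FG[measurable]: "F \<in> borel_measurable G"
    using measurable_comp[OF FEG mf] by (simp add: o_def)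
  have EG[measurable]: "E \<in> borel_measurable G"
    using measurable_comp[OF FEG ms] by (simp add: o_def)
  define p where "p = (\<lambda>x. bern_param \<gamma> (F x))"
  have pG[measurable]: "p \<in> borel_measurable G"
    unfolding p_def bern_param_def by measurable
  have p01: "0 \<le> p x" "p x \<le> 1" if "x \<in> space M" for x
    using min_bound[OF assms(2)] assms(8) that unfolding p_def by auto
  have pos: "\<forall>x\<in>space M. 0 \<le> active_evalue \<gamma> (T x) (F x) (E x)"
    using assms(3,5,8,10) by (auto simp: active_evalue_def)
  have neg0: "AE x in M. nn_cond_exp M G (\<lambda>x. ennreal (- T x)) x = 0"
  proof -
    have "AE x in M. nn_cond_exp M G (\<lambda>x. ennreal (- T x)) x = nn_cond_exp M G (\<lambda>x. 0) x"
      by (rule nn_cond_exp_cong) (use assms(10) in \<open>auto intro!: AE_I2 ennreal_neg\<close>)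
    moreover have "AE x in M. (\<lambda>x. 0::ennreal) x = nn_cond_exp M G (\<lambda>x. 0) x"
      by (rule nn_cond_exp_F_meas) simp
    ultimately show ?thesis by auto
  qed
  have sum1: "AE x in M. nn_cond_exp M G (\<lambda>x. ennreal (T x)) x + nn_cond_exp M G (\<lambda>x. ennreal (1 - T x)) x = 1"
  proof -
    have "AE x in M. nn_cond_exp M G (\<lambda>x. ennreal (T x)) x + nn_cond_exp M G (\<lambda>x. ennreal (1 - T x)) x
        = nn_cond_exp M G (\<lambda>x. ennreal (T x) + ennreal (1 - T x)) x"
      by (rule nn_cond_exp_sum) auto
    moreover have "AE x in M. nn_cond_exp M G (\<lambda>x. ennreal (T x) + ennreal (1 - T x)) x = nn_cond_exp M G (\<lambda>x. 1) x"
      by (rule nn_cond_exp_cong) (use assms(10) in \<open>auto intro!: AE_I2 simp flip: ennreal_plus\<close>)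
    moreover have "AE x in M. (\<lambda>x. 1::ennreal) x = nn_cond_exp M G (\<lambda>x. 1) x"
      by (rule nn_cond_exp_F_meas) simp
    ultimately show ?thesis by auto
  qed
  have cT: "AE x in M. nn_cond_exp M G (\<lambda>x. ennreal (T x)) x = ennreal (p x)
           \<and> nn_cond_exp M G (\<lambda>x. ennreal (1 - T x)) x = ennreal (1 - p x)"
    using neg0 sum1 assms(11)
  proof eventually_elim
    case (elim x)
    let ?a = "nn_cond_exp M G (\<lambda>x. ennreal (T x)) x"
    let ?b = "nn_cond_exp M G (\<lambda>x. ennreal (1 - T x)) x"
    have afin: "?a \<noteq> top" using elim(2)
      by (metis ennreal_add_eq_top ennreal_one_neq_top)
    have bfin: "?b \<noteq> top" using elim(2)
      by (metis ennreal_add_eq_top ennreal_one_neq_top)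
    have "enn2real ?a = p x" using elim(1,3) unfolding real_cond_exp_def p_def G_def by simp
    then have a: "?a = ennreal (p x)" using afin by (metis ennreal_enn2real_if)
    have "?b = ennreal (enn2real ?b)" using bfin by (simp add: ennreal_enn2real_if)
    moreover have "enn2real ?a + enn2real ?b = 1"
    proof -
      have "enn2real (?a + ?b) = enn2real ?a + enn2real ?b"
        using afin bfin by (simp add: enn2real_plus top.not_eq_extremum)
      then show ?thesis using elim(2) by simp
    qed
    ultimately have b: "?b = ennreal (enn2real ?b)" "enn2real ?b = 1 - p x"
      using \<open>enn2real ?a = p x\<close> by linarith+
    show ?case using a b by simp
  qed
  have I1: "(\<integral>\<^sup>+ x. ennreal (F x) * ennreal (1 - T x) \<partial>M) = (\<integral>\<^sup>+ x. ennreal (F x) * ennreal (1 - p x) \<partial>M)"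
  proof -
    have "(\<integral>\<^sup>+ x. ennreal (F x) * ennreal (1 - T x) \<partial>M)
        = (\<integral>\<^sup>+ x. ennreal (F x) * nn_cond_exp M G (\<lambda>x. ennreal (1 - T x)) x \<partial>M)"
      by (rule nn_cond_exp_intg[symmetric]) auto
    also have "\<dots> = (\<integral>\<^sup>+ x. ennreal (F x) * ennreal (1 - p x) \<partial>M)"
      by (rule nn_integral_cong_AE) (use cT in auto)
    finally show ?thesis .
  qed
  have I2: "(\<integral>\<^sup>+ x. ennreal ((1 - \<gamma>) * E x) * ennreal (T x) \<partial>M) = (\<integral>\<^sup>+ x. ennreal ((1 - \<gamma>) * E x) * ennreal (p x) \<partial>M)"
  proof -
    have "(\<integral>\<^sup>+ x. ennreal ((1 - \<gamma>) * E x) * ennreal (T x) \<partial>M)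
        = (\<integral>\<^sup>+ x. ennreal ((1 - \<gamma>) * E x) * nn_cond_exp M G (\<lambda>x. ennreal (T x)) x \<partial>M)"
      by (rule nn_cond_exp_intg[symmetric]) auto
    also have "\<dots> = (\<integral>\<^sup>+ x. ennreal ((1 - \<gamma>) * E x) * ennreal (p x) \<partial>M)"
      by (rule nn_integral_cong_AE) (use cT in auto)
    finally show ?thesis .
  qed
  have "(\<integral>\<^sup>+ x. ennreal (active_evalue \<gamma> (T x) (F x) (E x)) \<partial>M)
      = (\<integral>\<^sup>+ x. ennreal (F x) * ennreal (1 - T x) + ennreal ((1 - \<gamma>) * E x) * ennreal (T x) \<partial>M)"
  proof (rule nn_integral_cong)
    fix x assume x: "x \<in> space M"
    have "T x \<in> {0,1}" "0 \<le> F x" "0 \<le> E x" using x assms(5,8,10) by auto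
    then show "ennreal (active_evalue \<gamma> (T x) (F x) (E x)) = ennreal (F x) * ennreal (1 - T x) + ennreal ((1 - \<gamma>) * E x) * ennreal (T x)"
      using assms(3) by (auto simp: active_evalue_def)
  qed
  also have "\<dots> = (\<integral>\<^sup>+ x. ennreal (F x) * ennreal (1 - T x) \<partial>M) + (\<integral>\<^sup>+ x. ennreal ((1 - \<gamma>) * E x) * ennreal (T x) \<partial>M)"
    by (rule nn_integral_add) auto
  also have "\<dots> = (\<integral>\<^sup>+ x. ennreal (F x) * ennreal (1 - p x) \<partial>M) + (\<integral>\<^sup>+ x. ennreal ((1 - \<gamma>) * E x) * ennreal (p x) \<partial>M)"
    using I1 I2 by simp
  also have "\<dots> \<le> (\<integral>\<^sup>+ x. ennreal \<gamma> \<partial>M) + (\<integral>\<^sup>+ x. ennreal (1 - \<gamma>) * ennreal (E x) \<partial>M)"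
  proof (rule add_mono)
    show "(\<integral>\<^sup>+ x. ennreal (F x) * ennreal (1 - p x) \<partial>M) \<le> (\<integral>\<^sup>+ x. ennreal \<gamma> \<partial>M)"
    proof (rule nn_integral_mono)
      fix x assume x: "x \<in> space M"
      have "(1 - p x) * F x \<le> \<gamma>" using min_bound(1)[OF assms(2)] assms(8) x unfolding p_def by auto
      then show "ennreal (F x) * ennreal (1 - p x) \<le> ennreal \<gamma>"
        using p01[OF x] assms(8) x by (simp add: ennreal_mult'[symmetric] mult.commute ennreal_leI)
    qed
    show "(\<integral>\<^sup>+ x. ennreal ((1 - \<gamma>) * E x) * ennreal (p x) \<partial>M) \<le> (\<integral>\<^sup>+ x. ennreal (1 - \<gamma>) * ennreal (E x) \<partial>M)"
    proof (rule nn_integral_mono)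
      fix x assume x: "x \<in> space M"
      have "(1 - \<gamma>) * E x * p x \<le> (1 - \<gamma>) * E x"
        using p01[OF x] assms(3,5) x by (simp add: mult_left_le)
      then show "ennreal ((1 - \<gamma>) * E x) * ennreal (p x) \<le> ennreal (1 - \<gamma>) * ennreal (E x)"
        using p01[OF x] assms(3,5) x by (simp add: ennreal_mult'[symmetric] ennreal_mult[symmetric] ennreal_leI)
    qed
  qed
  also have "\<dots> = ennreal \<gamma> + ennreal (1 - \<gamma>) * (\<integral>\<^sup>+ x. ennreal (E x) \<partial>M)"
    by (simp add: nn_integral_cmult emeasure_space_1)
  also have "\<dots> \<le> ennreal \<gamma> + ennreal (1 - \<gamma>) * 1"
    by (intro add_left_mono mult_left_mono assms(6)) auto
  also have "\<dots> = 1" using assms(2,3) by (simp flip: ennreal_plus)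
  finally show ?thesis using pos by simp
qed

end
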